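(* Let $n\ge2$, $\rho^*\ge0$, $k_\rho,k_z,k_\phi,k_\omega>0$, and nonnegative constants $\xi_1,\dots,\xi_n$ with average $\bar\xi=\frac1n\sum_{i=1}^n\xi_i$. Consider the closed-loop system, for $i=1,\dots,n$, $$\dot\rho_i=k_\rho(\rho^*-\rho_i),\quad \dot\omega_i=k_\omega(\bar\phi_i-\phi_i),\ \omega_i(t_0)=0,\quad \dot\phi_i=\omega_i+k_\phi(\bar\phi_i-\phi_i)+\xi_i,\quad \dot z_i=-k_zz_i,$$ with $\bar\phi_i$ as defined in the context. Then for every initial condition of $(\rho_i,\phi_i,z_i)$ (and $\omega_i(t_0)=0$), as $t\to\infty$, exponentially: $\rho_i\to\rho^*$, $\phi_i-\bar\phi_i\to0$, $\dot\phi_i\to\bar\xi$, and $z_i\to0$, for all $i$.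
   Context: There are $n$ robots with cylindrical coordinates $(\rho_i,\phi_i,z_i)$ relative to a target frame (radius, phase, height), whose dynamics after a feedback transformation are $\dot\rho_i,\dot\phi_i,\dot z_i$ equal to free inputs; $\omega_i$ is an internal controller state. The phases $\phi_i(t)$ are real-valued (not reduced modulo $2\pi$), robots indexed in counterclockwise phase order at the initial time. Phase averages: $\bar\phi_1=\frac{\phi_2+\phi_n-2\pi}{2}$, $\bar\phi_i=\frac{\phi_{i+1}+\phi_{i-1}}{2}$ for $2\le i\le n-1$, $\bar\phi_n=\frac{\phi_1+2\pi+\phi_{n-1}}{2}$. *)

theory Defs
  imports "HOL-Analysis.Analysis"
begin

text \<open>Phase averages. Robots are indexed 1..n; phi i is the (real-valued, not
reduced mod 2 pi) phase of robot i at a fixed time.\<close>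
definition phibar :: "nat \<Rightarrow> (nat \<Rightarrow> real) \<Rightarrow> nat \<Rightarrow> real" where
  "phibar n phi i =
     (if i = 1 then (phi 2 + phi n - 2 * pi) / 2
      else if i = n then (phi 1 + 2 * pi + phi (n - 1)) / 2
      else (phi (i + 1) + phi (i - 1)) / 2)"

end

theory Submission
  imports Defs
begin


lemma nonincr_within:
  fixes f f' :: "real \<Rightarrow> real"
  assumes d: "\<And>t. t \<ge> t0 \<Longrightarrow> (f has_real_derivative f' t) (at t within {t0..})"
    and neg: "\<And>t. t \<ge> t0 \<Longrightarrow> f' t \<le> 0"
    and ab: "t0 \<le> a" "a \<le> b"
  shows "f b \<le> f a"
proof (rule DERIV_nonpos_imp_decreasing_open[OF ab(2)])
  fix x assume x: "a < x" "x < b"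
  have "(f has_real_derivative f' x) (at x within {t0<..})"
    using d[of x] x ab by (auto intro: has_field_derivative_subset)
  then have "(f has_real_derivative f' x) (at x)"
  proof -
    have "at x within {t0<..} = at x" using x ab by (intro at_within_open) auto
    with \<open>(f has_real_derivative f' x) (at x within {t0<..})\<close> show ?thesis by simp
  qed
  then show "\<exists>y. (f has_real_derivative y) (at x) \<and> y \<le> 0" using neg[of x] x ab by auto
next
  have "continuous_on {t0..} f"
    using d by (meson DERIV_continuous atLeast_iff continuous_on_eq_continuous_within)
  then show "continuous_on {a..b} f" by (rule continuous_on_subset) (use ab in auto)
qed

lemma exp_decay_within:
  fixes g g' :: "real \<Rightarrow> real"
  assumes d: "\<And>t. t \<ge> t0 \<Longrightarrow> (g has_real_derivative g' t) (at t within {t0..})"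
    and le: "\<And>t. t \<ge> t0 \<Longrightarrow> g' t \<le> - a * g t"
    and t: "t \<ge> t0"
  shows "g t \<le> g t0 * exp (- a * (t - t0))"
proof -
  define h where "h s = g s * exp (a * (s - t0))" for s
  have hd: "(h has_real_derivative (g' s + a * g s) * exp (a * (s - t0))) (at s within {t0..})"
    if s: "s \<ge> t0" for s
  proof -
    have e: "((\<lambda>s. exp (a * (s - t0))) has_real_derivative exp (a * (s - t0)) * (a * (1 - 0))) (at s within {t0..})"
      by (intro DERIV_chain2[OF DERIV_exp] DERIV_cmult DERIV_diff DERIV_ident DERIV_const)
    have "((\<lambda>s. g s * exp (a * (s - t0))) has_real_derivative g s * (exp (a * (s - t0)) * (a * (1 - 0))) + g' s * exp (a * (s - t0))) (at s within {t0..})"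
      by (rule DERIV_mult'[OF d[OF s] e])
    then show ?thesis unfolding h_def[abs_def] by (simp add: algebra_simps)
  qed
  have hn: "(g' s + a * g s) * exp (a * (s - t0)) \<le> 0" if s: "s \<ge> t0" for s
    using le[OF s] by (simp add: mult_nonpos_nonneg)
  have "h t \<le> h t0"
    by (rule nonincr_within[of t0 h, OF hd hn]) (use t in auto)
  then have "g t * exp (a * (t - t0)) \<le> g t0" by (simp add: h_def)
  then have "g t * exp (a * (t - t0)) * exp (- a * (t - t0)) \<le> g t0 * exp (- a * (t - t0))"
    by (rule mult_right_mono) simp
  then show ?thesis by (simp add: mult.assoc flip: exp_add)
qed



definition nx :: "nat \<Rightarrow> nat \<Rightarrow> nat" where "nx n i = (if i = n then 1 else i + 1)"
definition pv :: "nat \<Rightarrow> nat \<Rightarrow> nat" where "pv n i = (if i = 1 then n else i - 1)"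

lemma nx_mem: "n \<ge> 1 \<Longrightarrow> i \<in> {1..n} \<Longrightarrow> nx n i \<in> {1..n}" by (auto simp: nx_def)
lemma pv_mem: "n \<ge> 1 \<Longrightarrow> i \<in> {1..n} \<Longrightarrow> pv n i \<in> {1..n}" by (auto simp: pv_def)
lemma nx_pv: "n \<ge> 1 \<Longrightarrow> i \<in> {1..n} \<Longrightarrow> nx n (pv n i) = i" by (auto simp: nx_def pv_def)
lemma pv_nx: "n \<ge> 1 \<Longrightarrow> i \<in> {1..n} \<Longrightarrow> pv n (nx n i) = i" by (auto simp: nx_def pv_def)

lemma sum_nx: assumes "n \<ge> 1" shows "(\<Sum>i=1..n. f (nx n i)) = (\<Sum>i=1..n. (f i :: real))"
  by (rule sum.reindex_bij_witness[where i="pv n" and j="nx n"])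
     (use assms in \<open>auto simp: nx_def pv_def\<close>)

lemma sum_pv: assumes "n \<ge> 1" shows "(\<Sum>i=1..n. f (pv n i)) = (\<Sum>i=1..n. (f i :: real))"
  by (rule sum.reindex_bij_witness[where i="nx n" and j="pv n"])
     (use assms in \<open>auto simp: nx_def pv_def\<close>)

lemma phibar_eq:
  assumes "n \<ge> 2" "i \<in> {1..n}"
  shows "phibar n phi i = (phi (nx n i) + phi (pv n i)) / 2 + (if i = 1 then - pi else if i = n then pi else 0)"
  using assms by (auto simp: phibar_def nx_def pv_def field_simps numeral_2_eq_2)

lemma telescope_bound:
  fixes x :: "nat \<Rightarrow> real"
  assumes "i \<le> j"
  shows "\<bar>x j - x i\<bar> \<le> (\<Sum>k\<in>{i..<j}. \<bar>x (k+1) - x k\<bar>)"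
  using assms
proof (induction j rule: dec_induct)
  case base then show ?case by simp
next
  case (step j)
  have "\<bar>x (Suc j) - x i\<bar> \<le> \<bar>x j - x i\<bar> + \<bar>x (j+1) - x j\<bar>" by simp
  also have "\<dots> \<le> (\<Sum>k\<in>{i..<j}. \<bar>x (k+1) - x k\<bar>) + \<bar>x (j+1) - x j\<bar>" using step by simp
  finally show ?case using step by simp
qed

lemma pair_bound:
  fixes x :: "nat \<Rightarrow> real"
  assumes n: "n \<ge> 1" and i: "i \<in> {1..n}" and j: "j \<in> {1..n}"
  shows "\<bar>x j - x i\<bar> \<le> (\<Sum>k=1..n. \<bar>x (nx n k) - x k\<bar>)"
proof -
  have gen: "\<bar>x b - x a\<bar> \<le> (\<Sum>k=1..n. \<bar>x (nx n k) - x k\<bar>)" if ab: "a \<le> b" "a \<in> {1..n}" "b \<in> {1..n}" for a b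
  proof -
    have "\<bar>x b - x a\<bar> \<le> (\<Sum>k\<in>{a..<b}. \<bar>x (k+1) - x k\<bar>)" by (rule telescope_bound[OF ab(1)])
    also have "\<dots> = (\<Sum>k\<in>{a..<b}. \<bar>x (nx n k) - x k\<bar>)"
      by (rule sum.cong) (use ab in \<open>auto simp: nx_def\<close>)
    also have "\<dots> \<le> (\<Sum>k=1..n. \<bar>x (nx n k) - x k\<bar>)"
      by (rule sum_mono2) (use ab in auto)
    finally show ?thesis .
  qed
  show ?thesis
  proof (cases "i \<le> j")
    case True then show ?thesis using gen i j by blast
  next
    case False then show ?thesis using gen[of j i] i j by (simp add: abs_minus_commute)
  qed
qed

lemma poincare:
  fixes x :: "nat \<Rightarrow> real"
  assumes n: "n \<ge> 1" and s0: "(\<Sum>i=1..n. x i) = 0"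
  shows "(\<Sum>i=1..n. (x i)^2) \<le> real n ^ 2 * (\<Sum>i=1..n. (x (nx n i) - x i)^2)"
proof -
  define T where "T = (\<Sum>k=1..n. \<bar>x (nx n k) - x k\<bar>)"
  have T0: "T \<ge> 0" unfolding T_def by (rule sum_nonneg) simp
  have xi: "\<bar>x i\<bar> \<le> T" if i: "i \<in> {1..n}" for i
  proof -
    have eq: "real n * x i = (\<Sum>j=1..n. x i - x j)" using s0 by (simp add: sum_subtractf)
    have "real n * \<bar>x i\<bar> = \<bar>real n * x i\<bar>" by (simp add: abs_mult)
    also have "\<dots> = \<bar>\<Sum>j=1..n. x i - x j\<bar>" using eq by simp
    also have "\<dots> \<le> (\<Sum>j=1..n. \<bar>x i - x j\<bar>)" by (rule sum_abs)
    also have "\<dots> \<le> (\<Sum>j=1..n. T)"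
      by (rule sum_mono) (use pair_bound[OF n _ i] in \<open>auto simp: T_def abs_minus_commute\<close>)
    also have "\<dots> = real n * T" by simp
    finally show ?thesis using n by simp
  qed
  have T2: "T^2 \<le> (\<Sum>i=1..n. (x (nx n i) - x i)^2) * real n"
    using sum_squared_le_sum_of_squares[of "\<lambda>k. \<bar>x (nx n k) - x k\<bar>" "{1..n}"]
    by (simp add: T_def)
  have "(\<Sum>i=1..n. (x i)^2) \<le> (\<Sum>i=1..n. T^2)"
  proof (rule sum_mono)
    fix i assume "i \<in> {1..n}"
    then have "\<bar>x i\<bar> \<le> T" by (rule xi)
    then have "\<bar>x i\<bar>^2 \<le> T^2" by (rule power_mono) simp
    then show "(x i)^2 \<le> T^2" by simp
  qed
  also have "\<dots> = real n * T^2" by simp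
  also have "\<dots> \<le> real n * ((\<Sum>i=1..n. (x (nx n i) - x i)^2) * real n)"
    by (rule mult_left_mono[OF T2]) simp
  finally show ?thesis by (simp add: power2_eq_square algebra_simps)
qed



lemma sbp1:
  fixes D a E :: "nat \<Rightarrow> real"
  assumes n: "n \<ge> 1" and ED: "\<And>i. i \<in> {1..n} \<Longrightarrow> E i = (D i - D (pv n i)) / 2"
  shows "(\<Sum>i=1..n. D i * (a (nx n i) - a i)) = - 2 * (\<Sum>i=1..n. E i * a i)"
proof -
  have "(\<Sum>i=1..n. D i * a (nx n i)) = (\<Sum>i=1..n. D (pv n i) * a (nx n (pv n i)))"
    using sum_pv[OF n, of "\<lambda>i. D i * a (nx n i)"] by simp
  also have "\<dots> = (\<Sum>i=1..n. D (pv n i) * a i)"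
    by (rule sum.cong) (auto simp: nx_pv[OF n])
  finally have 1: "(\<Sum>i=1..n. D i * a (nx n i)) = (\<Sum>i=1..n. D (pv n i) * a i)" .
  have "(\<Sum>i=1..n. D i * (a (nx n i) - a i)) = (\<Sum>i=1..n. D i * a (nx n i)) - (\<Sum>i=1..n. D i * a i)"
    by (simp add: algebra_simps sum_subtractf)
  also have "\<dots> = (\<Sum>i=1..n. (D (pv n i) - D i) * a i)"
    unfolding 1 by (simp add: sum_subtractf left_diff_distrib)
  also have "\<dots> = (\<Sum>i=1..n. - 2 * (E i * a i))"
    by (rule sum.cong) (auto simp: ED algebra_simps)
  finally show ?thesis by (simp add: sum_distrib_left)
qed

lemma sbp2:
  fixes S a :: "nat \<Rightarrow> real"
  assumes n: "n \<ge> 1"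
  shows "(\<Sum>i=1..n. S i * ((a (nx n i) + a (pv n i)) / 2 - a i))
       = - (1/2) * (\<Sum>i=1..n. (S (nx n i) - S i) * (a (nx n i) - a i))"
proof -
  have 1: "(\<Sum>i=1..n. S (nx n i) * a i) = (\<Sum>i=1..n. S i * a (pv n i))"
  proof -
    have "(\<Sum>i=1..n. S (nx n i) * a i) = (\<Sum>i=1..n. S (nx n (pv n i)) * a (pv n i))"
      using sum_pv[OF n, of "\<lambda>i. S (nx n i) * a i"] by simp
    also have "\<dots> = (\<Sum>i=1..n. S i * a (pv n i))"
      by (rule sum.cong) (auto simp: nx_pv[OF n])
    finally show ?thesis .
  qed
  have 2: "(\<Sum>i=1..n. S (nx n i) * a (nx n i)) = (\<Sum>i=1..n. S i * a i)"
    using sum_nx[OF n, of "\<lambda>i. S i * a i"] by simp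
  have "(\<Sum>i=1..n. (S (nx n i) - S i) * (a (nx n i) - a i))
      = (\<Sum>i=1..n. S (nx n i) * a (nx n i)) - (\<Sum>i=1..n. S (nx n i) * a i)
        - (\<Sum>i=1..n. S i * a (nx n i)) + (\<Sum>i=1..n. S i * a i)"
    by (simp add: algebra_simps sum_subtractf sum.distrib)
  also have "\<dots> = 2 * (\<Sum>i=1..n. S i * a i) - (\<Sum>i=1..n. S i * a (pv n i)) - (\<Sum>i=1..n. S i * a (nx n i))"
    unfolding 1 2 by simp
  finally have 3: "(\<Sum>i=1..n. (S (nx n i) - S i) * (a (nx n i) - a i))
     = 2 * (\<Sum>i=1..n. S i * a i) - (\<Sum>i=1..n. S i * a (pv n i)) - (\<Sum>i=1..n. S i * a (nx n i))" .
  have "(\<Sum>i=1..n. S i * ((a (nx n i) + a (pv n i)) / 2 - a i))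
     = (1/2) * (\<Sum>i=1..n. S i * a (nx n i)) + (1/2) * (\<Sum>i=1..n. S i * a (pv n i)) - (\<Sum>i=1..n. S i * a i)"
  proof -
    have "(\<Sum>i=1..n. S i * ((a (nx n i) + a (pv n i)) / 2 - a i))
       = (\<Sum>i=1..n. (1/2) * (S i * a (nx n i)) + (1/2) * (S i * a (pv n i)) - S i * a i)"
      by (rule sum.cong) (auto simp: algebra_simps)
    also have "\<dots> = (1/2) * (\<Sum>i=1..n. S i * a (nx n i)) + (1/2) * (\<Sum>i=1..n. S i * a (pv n i)) - (\<Sum>i=1..n. S i * a i)"
      by (simp only: sum_subtractf sum.distrib sum_distrib_left)
    finally show ?thesis .
  qed
  then show ?thesis unfolding 3 by (simp add: field_simps)
qed



lemma half_sum: "(\<Sum>i\<in>I. (f i + g i) / 2) = ((\<Sum>i\<in>I. f i) + (\<Sum>i\<in>I. g i)) / (2::real)"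
  by (metis sum.distrib sum_divide_distrib)

lemma cross_bound:
  fixes a b c :: real
  shows "- c * (a * b) \<le> a^2/2 + c^2/2 * b^2"
proof -
  have "0 \<le> (a + c * b)^2" by simp
  moreover have "(a + c * b)^2 = a^2 + 2 * (c * (a * b)) + c^2 * b^2" by (simp add: power2_eq_square algebra_simps)
  ultimately show ?thesis by linarith
qed

lemma lyap_core:
  fixes E D S :: "nat \<Rightarrow> real" and kw kp ep xb :: real
  assumes n: "n \<ge> 1"
    and ED: "\<And>i. i \<in> {1..n} \<Longrightarrow> E i = (D i - D (pv n i)) / 2"
    and sD: "(\<Sum>i=1..n. D i) = 0"
    and sS: "(\<Sum>i=1..n. S i) = 0"
    and kw: "kw > 0" and kp: "kp > 0"
    and ep: "ep > 0" "ep \<le> 1" "ep \<le> kw / 2" "ep * (kw + kp^2) \<le> kw * kp"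
  defines "F \<equiv> \<lambda>i. S i + xb + kp * E i"
  defines "V \<equiv> (\<Sum>i=1..n. (S i)^2) + kw / 2 * (\<Sum>i=1..n. (D i)^2) + ep * (\<Sum>i=1..n. S i * E i)"
  defines "Vd \<equiv> (\<Sum>i=1..n. 2 * kw * S i * E i) + kw * (\<Sum>i=1..n. D i * (F (nx n i) - F i))
      + ep * (\<Sum>i=1..n. kw * E i * E i + S i * ((F (nx n i) + F (pv n i)) / 2 - F i))"
  shows "Vd \<le> - (min (ep/4) (kw*kp) / (2 * real n ^ 2 * (1 + kw) + 1)) * V"
    and "V \<ge> (1/2) * (\<Sum>i=1..n. (S i)^2) + kw / 4 * (\<Sum>i=1..n. (E i)^2)"
proof -
  define A where "A = (\<Sum>i=1..n. (E i)^2)"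
  define B where "B = (\<Sum>i=1..n. (S (nx n i) - S i)^2)"
  define Cx where "Cx = (\<Sum>i=1..n. (S (nx n i) - S i) * (E (nx n i) - E i))"
  define Q where "Q = (\<Sum>i=1..n. (D i)^2)"
  define SS where "SS = (\<Sum>i=1..n. (S i)^2)"
  define SE where "SE = (\<Sum>i=1..n. S i * E i)"
  have sE: "(\<Sum>i=1..n. E i) = 0"
  proof -
    have "(\<Sum>i=1..n. E i) = (\<Sum>i=1..n. (D i - D (pv n i)) / 2)" by (rule sum.cong) (auto simp: ED)
    also have "\<dots> = ((\<Sum>i=1..n. D i) - (\<Sum>i=1..n. D (pv n i))) / 2"
      by (metis sum_divide_distrib sum_subtractf)
    also have "\<dots> = 0" using sum_pv[OF n, of D] by simp
    finally show ?thesis .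
  qed
  have A0: "A \<ge> 0" "B \<ge> 0" "SS \<ge> 0" "Q \<ge> 0" unfolding A_def B_def SS_def Q_def by (auto intro: sum_nonneg)
  have EF: "(\<Sum>i=1..n. E i * F i) = SE + kp * A"
  proof -
    have "(\<Sum>i=1..n. E i * F i) = (\<Sum>i=1..n. S i * E i + xb * E i + kp * (E i)^2)"
      by (rule sum.cong) (auto simp: F_def algebra_simps power2_eq_square)
    also have "\<dots> = SE + xb * (\<Sum>i=1..n. E i) + kp * A"
      by (simp add: sum.distrib sum_distrib_left SE_def A_def)
    finally show ?thesis using sE by simp
  qed
  have t1: "(\<Sum>i=1..n. D i * (F (nx n i) - F i)) = - 2 * (SE + kp * A)"
    using sbp1[of n E D F, OF n ED] EF by simp
  have t2: "(\<Sum>i=1..n. S i * ((F (nx n i) + F (pv n i)) / 2 - F i)) = - (1/2) * (B + kp * Cx)"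
  proof -
    have "(\<Sum>i=1..n. (S (nx n i) - S i) * (F (nx n i) - F i))
        = (\<Sum>i=1..n. (S (nx n i) - S i)^2 + kp * ((S (nx n i) - S i) * (E (nx n i) - E i)))"
      by (rule sum.cong) (auto simp: F_def algebra_simps power2_eq_square)
    also have "\<dots> = B + kp * Cx" by (simp add: sum.distrib sum_distrib_left B_def Cx_def)
    finally show ?thesis using sbp2[OF n, of S F] by simp
  qed
  have t3: "(\<Sum>i=1..n. kw * E i * E i + S i * ((F (nx n i) + F (pv n i)) / 2 - F i)) = kw * A - (1/2) * (B + kp * Cx)"
    using t2 by (simp add: sum.distrib sum_distrib_left A_def power2_eq_square mult.assoc)
  have Vd_eq: "Vd = 2 * kw * SE - 2 * kw * (SE + kp * A) + ep * (kw * A - (1/2) * (B + kp * Cx))"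
  proof -
    have "(\<Sum>i=1..n. 2 * kw * S i * E i) = 2 * kw * SE"
      by (simp add: SE_def sum_distrib_left mult.assoc)
    then show ?thesis unfolding Vd_def t1 t3 by (simp add: algebra_simps)
  qed
  have DE: "(\<Sum>i=1..n. (E (nx n i) - E i)^2) \<le> 4 * A"
  proof -
    have "(\<Sum>i=1..n. (E (nx n i) - E i)^2) \<le> (\<Sum>i=1..n. 2 * (E (nx n i))^2 + 2 * (E i)^2)"
    proof (rule sum_mono)
      fix i
      have "0 \<le> (E (nx n i) + E i)^2" by simp
      then show "(E (nx n i) - E i)^2 \<le> 2 * (E (nx n i))^2 + 2 * (E i)^2"
        by (simp add: power2_eq_square algebra_simps)
    qed
    also have "\<dots> = 4 * A" using sum_nx[OF n, of "\<lambda>i. (E i)^2"]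
      by (simp add: sum.distrib sum_distrib_left[symmetric] A_def)
    finally show ?thesis .
  qed
  have Cxb: "- kp * Cx \<le> B / 2 + 2 * kp^2 * A"
  proof -
    have "- kp * Cx = (\<Sum>i=1..n. - kp * ((S (nx n i) - S i) * (E (nx n i) - E i)))"
      by (simp add: Cx_def sum_distrib_left)
    also have "\<dots> \<le> (\<Sum>i=1..n. (S (nx n i) - S i)^2 / 2 + kp^2 / 2 * (E (nx n i) - E i)^2)"
    proof (rule sum_mono)
      fix i
      show "- kp * ((S (nx n i) - S i) * (E (nx n i) - E i)) \<le> (S (nx n i) - S i)^2 / 2 + kp^2 / 2 * (E (nx n i) - E i)^2"
        by (rule cross_bound)
    qed
    also have "\<dots> = B / 2 + kp^2 / 2 * (\<Sum>i=1..n. (E (nx n i) - E i)^2)"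
      by (simp add: sum.distrib sum_distrib_left B_def sum_divide_distrib)
    also have "\<dots> \<le> B / 2 + kp^2 / 2 * (4 * A)"
      using DE by (intro add_left_mono mult_left_mono) auto
    finally show ?thesis by (simp add: algebra_simps)
  qed
  have Vd_le: "Vd \<le> - (kw * kp) * A - ep / 4 * B"
  proof -
    have "ep * (- kp * Cx) \<le> ep * (B / 2 + 2 * kp^2 * A)"
      using Cxb ep by (intro mult_left_mono) auto
    then have "Vd \<le> - 2 * kw * kp * A + ep * kw * A - ep / 2 * B + ep * (B / 2 + 2 * kp^2 * A) / 2"
    proof -
      have "Vd = - 2 * kw * kp * A + ep * kw * A - ep / 2 * B + (ep * (- kp * Cx)) / 2"
        unfolding Vd_eq by (simp add: algebra_simps)
      then show ?thesis using \<open>ep * (- kp * Cx) \<le> ep * (B / 2 + 2 * kp^2 * A)\<close> by linarith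
    qed
    also have "\<dots> = - 2 * kw * kp * A + ep * (kw + kp^2) * A - ep / 4 * B"
      by (simp add: algebra_simps)
    also have "\<dots> \<le> - 2 * kw * kp * A + kw * kp * A - ep / 4 * B"
      using mult_right_mono[OF ep(4) A0(1)] by (simp add: algebra_simps)
    finally show ?thesis by (simp add: algebra_simps)
  qed
  have SEb: "\<bar>SE\<bar> \<le> (SS + A) / 2"
  proof -
    have "\<bar>SE\<bar> \<le> (\<Sum>i=1..n. \<bar>S i * E i\<bar>)" unfolding SE_def by (rule sum_abs)
    also have "\<dots> \<le> (\<Sum>i=1..n. ((S i)^2 + (E i)^2) / 2)"
    proof (rule sum_mono)
      fix i
      have "0 \<le> (\<bar>S i\<bar> - \<bar>E i\<bar>)^2" by simp
      then show "\<bar>S i * E i\<bar> \<le> ((S i)^2 + (E i)^2) / 2"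
        by (simp add: power2_eq_square algebra_simps abs_mult)
    qed
    also have "\<dots> = (SS + A) / 2" unfolding half_sum SS_def A_def ..
    finally show ?thesis .
  qed
  have AQ: "A \<le> Q"
  proof -
    have "A \<le> (\<Sum>i=1..n. ((D i)^2 + (D (pv n i))^2) / 2)"
      unfolding A_def
    proof (rule sum_mono)
      fix i assume i: "i \<in> {1..n}"
      have "0 \<le> (D i + D (pv n i))^2" by simp
      then show "(E i)^2 \<le> ((D i)^2 + (D (pv n i))^2) / 2"
        by (simp add: ED[OF i] power2_eq_square algebra_simps)
    qed
    also have "\<dots> = Q" unfolding half_sum using sum_pv[OF n, of "\<lambda>i. (D i)^2"]
      by (simp add: Q_def)
    finally show ?thesis .
  qed
  have SSB: "SS \<le> real n ^ 2 * B" unfolding SS_def B_def by (rule poincare[OF n sS])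
  have QA: "Q \<le> real n ^ 2 * (4 * A)"
  proof -
    have "(\<Sum>i=1..n. (D (nx n i) - D i)^2) = (\<Sum>i=1..n. (2 * E (nx n i))^2)"
    proof (rule sum.cong)
      fix i assume i: "i \<in> {1..n}"
      have "E (nx n i) = (D (nx n i) - D i) / 2"
        using ED[OF nx_mem[OF n i]] pv_nx[OF n i] by simp
      then have "D (nx n i) - D i = 2 * E (nx n i)" by simp
      then show "(D (nx n i) - D i)^2 = (2 * E (nx n i))^2" by (simp only:)
    qed simp
    also have "\<dots> = 4 * A" using sum_nx[OF n, of "\<lambda>i. (2 * E i)^2"]
      by (simp add: A_def power_mult_distrib sum_distrib_left)
    finally have "(\<Sum>i=1..n. (D (nx n i) - D i)^2) = 4 * A" .
    with poincare[OF n sD] show ?thesis by (simp add: Q_def)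
  qed
  have V_eq: "V = SS + kw / 2 * Q + ep * SE" by (simp add: V_def SS_def Q_def SE_def)
  have V_up: "V \<le> 3/2 * real n ^ 2 * B + (2 * kw * real n ^ 2 + 1/2) * A"
  proof -
    have "ep * SE \<le> (SS + A) / 2"
    proof -
      have "ep * SE \<le> ep * \<bar>SE\<bar>" using ep by (simp add: mult_left_mono)
      also have "\<dots> \<le> 1 * \<bar>SE\<bar>" using ep by (intro mult_right_mono) auto
      finally show ?thesis using SEb by simp
    qed
    moreover have "kw / 2 * Q \<le> kw / 2 * (real n ^ 2 * (4 * A))" using QA kw by (intro mult_left_mono) auto
    ultimately have "V \<le> 3/2 * SS + kw / 2 * (real n ^ 2 * (4 * A)) + A / 2" unfolding V_eq by simp
    moreover have "3/2 * SS \<le> 3/2 * (real n ^ 2 * B)" using SSB by simp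
    ultimately show ?thesis by (simp add: algebra_simps)
  qed
  show "V \<ge> (1/2) * (\<Sum>i=1..n. (S i)^2) + kw / 4 * (\<Sum>i=1..n. (E i)^2)"
  proof -
    have "- ((SS + A) / 2) \<le> SE" using SEb by linarith
    then have "ep * (- ((SS + A) / 2)) \<le> ep * SE" using ep by (intro mult_left_mono) auto
    then have "ep * SE \<ge> - ep * ((SS + A) / 2)" by simp
    moreover have "ep * ((SS + A) / 2) \<le> SS / 2 + kw / 2 * A / 2"
    proof -
      have "ep * SS \<le> 1 * SS" using ep A0 by (intro mult_right_mono) auto
      moreover have "ep * A \<le> kw / 2 * A" using ep A0 by (intro mult_right_mono) auto
      ultimately show ?thesis by (simp add: algebra_simps)
    qed
    moreover have "kw / 2 * A \<le> kw / 2 * Q" using AQ kw by simp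
    ultimately have "V \<ge> SS / 2 + kw / 4 * A" unfolding V_eq by linarith
    then show ?thesis by (simp add: SS_def A_def)
  qed
  define K where "K = 2 * real n ^ 2 * (1 + kw) + 1"
  define al where "al = min (ep/4) (kw*kp) / K"
  have K1: "K \<ge> 1" unfolding K_def using kw by (simp add: mult_nonneg_nonneg)
  have al0: "al \<ge> 0" unfolding al_def using K1 ep kw kp by auto
  have c1: "al * (3/2 * real n ^ 2) \<le> ep / 4"
  proof -
    have "al * (3/2 * real n ^ 2) \<le> ep / 4 / K * (3/2 * real n ^ 2)"
      unfolding al_def using K1 by (intro mult_right_mono divide_right_mono) auto
    also have "\<dots> = ep / 4 * ((3/2 * real n ^ 2) / K)" by simp
    also have "\<dots> \<le> ep / 4 * 1"
    proof -
      have "0 \<le> kw * real n ^ 2" using kw by simp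
      then have "3/2 * real n ^ 2 \<le> K" unfolding K_def by (simp add: algebra_simps)
      then have "(3/2 * real n ^ 2) / K \<le> 1" using K1 by simp
      then show ?thesis using ep by (intro mult_left_mono) auto
    qed
    finally show ?thesis by simp
  qed
  have c2: "al * (2 * kw * real n ^ 2 + 1/2) \<le> kw * kp"
  proof -
    have "al * (2 * kw * real n ^ 2 + 1/2) \<le> kw * kp / K * (2 * kw * real n ^ 2 + 1/2)"
      unfolding al_def using K1 kw by (intro mult_right_mono divide_right_mono) auto
    also have "\<dots> = kw * kp * ((2 * kw * real n ^ 2 + 1/2) / K)" by simp
    also have "\<dots> \<le> kw * kp * 1"
    proof -
      have "2 * kw * real n ^ 2 + 1/2 \<le> K" unfolding K_def by (simp add: algebra_simps)
      then have "(2 * kw * real n ^ 2 + 1/2) / K \<le> 1" using K1 by simp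
      then show ?thesis using kw kp by (intro mult_left_mono) auto
    qed
    finally show ?thesis by simp
  qed
  have "al * V \<le> al * (3/2 * real n ^ 2 * B + (2 * kw * real n ^ 2 + 1/2) * A)"
    using V_up al0 by (rule mult_left_mono)
  also have "\<dots> = (al * (3/2 * real n ^ 2)) * B + (al * (2 * kw * real n ^ 2 + 1/2)) * A"
    by (simp add: algebra_simps)
  also have "\<dots> \<le> ep / 4 * B + kw * kp * A"
    using c1 c2 A0 by (intro add_mono mult_right_mono) auto
  finally have "al * V \<le> ep / 4 * B + kw * kp * A" .
  with Vd_le have "Vd \<le> - al * V" by simp
  then show "Vd \<le> - (min (ep/4) (kw*kp) / (2 * real n ^ 2 * (1 + kw) + 1)) * V"
    by (simp add: al_def K_def)
qed



lemma deriv_eqI: "(f has_real_derivative D) F \<Longrightarrow> D = E \<Longrightarrow> (f has_real_derivative E) F" by simp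

lemma not_bot_within: "t \<ge> t0 \<Longrightarrow> at t within {t0..} \<noteq> (bot :: real filter)"
proof -
  assume t: "t \<ge> t0"
  have "t islimpt {t0..t+1}" using t by simp
  then have "t islimpt {t0..}" by (rule islimpt_subset) auto
  then show ?thesis using trivial_limit_within by blast
qed

lemma sq_decay:
  fixes g :: "real \<Rightarrow> real"
  assumes d: "\<And>t. t \<ge> t0 \<Longrightarrow> (g has_real_derivative - k * g t) (at t within {t0..})"
    and t: "t \<ge> t0"
  shows "\<bar>g t\<bar> \<le> \<bar>g t0\<bar> * exp (- k * (t - t0))"
proof -
  have "(\<lambda>s. (g s)^2) t \<le> (\<lambda>s. (g s)^2) t0 * exp (- (2 * k) * (t - t0))"
  proof (rule exp_decay_within[OF _ _ t])
    fix s assume s: "s \<ge> t0"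
    show "((\<lambda>s. (g s)^2) has_real_derivative 2 * (g s * (- k * g s))) (at s within {t0..})"
      using DERIV_power[OF d[OF s], of 2] by (simp add: algebra_simps)
    show "2 * (g s * (- k * g s)) \<le> - (2 * k) * (g s)^2" by (simp add: power2_eq_square)
  qed
  also have "\<dots> = (\<bar>g t0\<bar> * exp (- k * (t - t0)))^2"
  proof -
    have "exp (- (2 * k) * (t - t0)) = exp (- k * (t - t0)) * exp (- k * (t - t0))"
      by (subst exp_add[symmetric]) (simp add: algebra_simps)
    then show ?thesis by (simp add: power_mult_distrib power2_eq_square)
  qed
  finally have "(g t)^2 \<le> (\<bar>g t0\<bar> * exp (- k * (t - t0)))^2" by simp
  then show ?thesis using abs_le_square_iff[of "g t" "\<bar>g t0\<bar> * exp (- k * (t - t0))"] by simp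
qed



theorem proposition3:
  fixes n :: nat and t0 rho_star k_rho k_z k_phi k_omega :: real
    and xi :: "nat \<Rightarrow> real"
    and rho phi z omega :: "nat \<Rightarrow> real \<Rightarrow> real"
  assumes n2: "n \<ge> 2"
    and rho_star: "rho_star \<ge> 0"
    and gains: "k_rho > 0" "k_z > 0" "k_phi > 0" "k_omega > 0"
    and xi_nonneg: "\<forall>i\<in>{1..n}. xi i \<ge> 0"
    and omega0: "\<forall>i\<in>{1..n}. omega i t0 = 0"
    and drho: "\<forall>i\<in>{1..n}. \<forall>t\<ge>t0.
        (rho i has_real_derivative k_rho * (rho_star - rho i t)) (at t within {t0..})"
    and domega: "\<forall>i\<in>{1..n}. \<forall>t\<ge>t0.
        (omega i has_real_derivative
           k_omega * (phibar n (\<lambda>j. phi j t) i - phi i t)) (at t within {t0..})"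
    and dphi: "\<forall>i\<in>{1..n}. \<forall>t\<ge>t0.
        (phi i has_real_derivative
           omega i t + k_phi * (phibar n (\<lambda>j. phi j t) i - phi i t) + xi i) (at t within {t0..})"
    and dz: "\<forall>i\<in>{1..n}. \<forall>t\<ge>t0.
        (z i has_real_derivative - k_z * z i t) (at t within {t0..})"
  shows "\<exists>c lam. c > 0 \<and> lam > 0 \<and>
     (\<forall>i\<in>{1..n}. \<forall>t\<ge>t0.
        \<bar>rho i t - rho_star\<bar> \<le> c * exp (- lam * (t - t0)) \<and>
        \<bar>phi i t - phibar n (\<lambda>j. phi j t) i\<bar> \<le> c * exp (- lam * (t - t0)) \<and>
        (\<forall>d. (phi i has_real_derivative d) (at t within {t0..}) \<longrightarrow>
             \<bar>d - (\<Sum>j=1..n. xi j) / real n\<bar> \<le> c * exp (- lam * (t - t0))) \<and>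
        \<bar>z i t\<bar> \<le> c * exp (- lam * (t - t0)))"
proof -
  have n1: "n \<ge> 1" using n2 by simp
  define kw where "kw = k_omega"
  define kp where "kp = k_phi"
  have kw: "kw > 0" and kp: "kp > 0" using gains by (auto simp: kw_def kp_def)
  define xb where "xb = (\<Sum>j=1..n. xi j) / real n"
  define Ef where "Ef t i = phibar n (\<lambda>j. phi j t) i - phi i t" for t i
  define Df where "Df t i = phi (nx n i) t - phi i t - 2 * pi / real n + (if i = n then 2 * pi else 0)" for t i
  define Sf where "Sf t i = omega i t + xi i - xb" for t i
  define Ff where "Ff t i = Sf t i + xb + kp * Ef t i" for t i
  define ep where "ep = min 1 (min (kw / 2) (kw * kp / (kw + kp^2)))"
  have ep: "ep > 0" "ep \<le> 1" "ep \<le> kw / 2" "ep * (kw + kp^2) \<le> kw * kp"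
  proof -
    have pos: "kw + kp^2 > 0" using kw by (simp add: add_pos_nonneg)
    show "ep > 0" using kw kp pos by (simp add: ep_def)
    show "ep \<le> 1" by (simp add: ep_def)
    show "ep \<le> kw / 2" unfolding ep_def by linarith
    have "ep \<le> kw * kp / (kw + kp^2)" by (simp add: ep_def)
    then show "ep * (kw + kp^2) \<le> kw * kp" using pos by (simp add: pos_le_divide_eq)
  qed
  define Vf where "Vf t = (\<Sum>i=1..n. (Sf t i)^2) + kw / 2 * (\<Sum>i=1..n. (Df t i)^2) + ep * (\<Sum>i=1..n. Sf t i * Ef t i)" for t
  define Vdf where "Vdf t = (\<Sum>i=1..n. 2 * kw * Sf t i * Ef t i) + kw * (\<Sum>i=1..n. Df t i * (Ff t (nx n i) - Ff t i))
      + ep * (\<Sum>i=1..n. kw * Ef t i * Ef t i + Sf t i * ((Ff t (nx n i) + Ff t (pv n i)) / 2 - Ff t i))" for t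
  define al where "al = min (ep/4) (kw*kp) / (2 * real n ^ 2 * (1 + kw) + 1)"
  have al: "al > 0"
  proof -
    have "0 \<le> 2 * real n ^ 2 * (1 + kw)" using kw by simp
    then have "2 * real n ^ 2 * (1 + kw) + 1 > 0" by linarith
    then show ?thesis using ep kw kp by (simp add: al_def)
  qed
  have ED: "Ef t i = (Df t i - Df t (pv n i)) / 2" if i: "i \<in> {1..n}" for t i
    using i n2 by (auto simp: Ef_def Df_def phibar_def nx_def pv_def field_simps numeral_2_eq_2)
  have sD: "(\<Sum>i=1..n. Df t i) = 0" for t
  proof -
    have "(\<Sum>i=1..n. Df t i) = (\<Sum>i=1..n. phi (nx n i) t) - (\<Sum>i=1..n. phi i t)
        - (\<Sum>i=1..n. 2 * pi / real n) + (\<Sum>i=1..n. (if i = n then 2 * pi else 0))"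
      by (simp add: Df_def sum.distrib sum_subtractf)
    also have "(\<Sum>i=1..n. (if i = n then 2 * pi else 0)) = 2 * pi"
      using n1 by (simp add: sum.delta)
    also have "(\<Sum>i=1..n. 2 * pi / real n) = 2 * pi" using n1 by simp
    finally show ?thesis using sum_nx[OF n1, of "\<lambda>i. phi i t"] by simp
  qed
  have sE: "(\<Sum>i=1..n. Ef t i) = 0" for t
  proof -
    have "(\<Sum>i=1..n. Ef t i) = (\<Sum>i=1..n. (Df t i - Df t (pv n i)) / 2)" by (rule sum.cong) (auto simp: ED)
    also have "\<dots> = ((\<Sum>i=1..n. Df t i) - (\<Sum>i=1..n. Df t (pv n i))) / 2"
      by (metis sum_divide_distrib sum_subtractf)
    also have "\<dots> = 0" using sum_pv[OF n1, of "Df t"] by simp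
    finally show ?thesis .
  qed
  have dphi': "(phi i has_real_derivative Ff t i) (at t within {t0..})" if i: "i \<in> {1..n}" and t: "t \<ge> t0" for i t
  proof -
    have "(phi i has_real_derivative omega i t + k_phi * (phibar n (\<lambda>j. phi j t) i - phi i t) + xi i) (at t within {t0..})"
      using dphi i t by blast
    then show ?thesis by (rule deriv_eqI) (simp add: Ff_def Sf_def Ef_def kp_def)
  qed
  have dE: "((\<lambda>t. Ef t i) has_real_derivative (Ff t (nx n i) + Ff t (pv n i)) / 2 - Ff t i) (at t within {t0..})"
    if i: "i \<in> {1..n}" and t: "t \<ge> t0" for i t
  proof -
    define c where "c = (if i = 1 then - pi else if i = n then pi else 0)"
    have eq: "(\<lambda>t. Ef t i) = (\<lambda>t. (phi (nx n i) t + phi (pv n i) t) / 2 + c - phi i t)"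
      by (rule ext) (simp add: Ef_def phibar_eq[OF n2 i] c_def)
    show ?thesis unfolding eq
      by (rule deriv_eqI[OF DERIV_diff[OF DERIV_add[OF DERIV_cdivide[OF DERIV_add[OF
            dphi'[OF nx_mem[OF n1 i] t] dphi'[OF pv_mem[OF n1 i] t]]] DERIV_const] dphi'[OF i t]]]) simp
  qed
  have dD: "((\<lambda>t. Df t i) has_real_derivative Ff t (nx n i) - Ff t i) (at t within {t0..})"
    if i: "i \<in> {1..n}" and t: "t \<ge> t0" for i t
    unfolding Df_def
    by (rule deriv_eqI[OF DERIV_add[OF DERIV_diff[OF DERIV_diff[OF
            dphi'[OF nx_mem[OF n1 i] t] dphi'[OF i t]] DERIV_const] DERIV_const]]) simp
  have dS: "((\<lambda>t. Sf t i) has_real_derivative kw * Ef t i) (at t within {t0..})"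
    if i: "i \<in> {1..n}" and t: "t \<ge> t0" for i t
  proof -
    have "(omega i has_real_derivative kw * Ef t i) (at t within {t0..})"
      using domega i t by (simp add: kw_def Ef_def)
    then show ?thesis unfolding Sf_def
      by (rule deriv_eqI[OF DERIV_diff[OF DERIV_add[OF _ DERIV_const] DERIV_const]]) simp
  qed
  have dV: "(Vf has_real_derivative Vdf t) (at t within {t0..})" if t: "t \<ge> t0" for t
  proof -
    have d1: "((\<lambda>t. \<Sum>i=1..n. (Sf t i)^2) has_real_derivative (\<Sum>i=1..n. 2 * kw * Sf t i * Ef t i)) (at t within {t0..})"
      by (rule DERIV_sum, rule deriv_eqI[OF DERIV_power[OF dS]]) (use t in auto)
    have d2: "((\<lambda>t. \<Sum>i=1..n. (Df t i)^2) has_real_derivative (\<Sum>i=1..n. 2 * (Df t i * (Ff t (nx n i) - Ff t i)))) (at t within {t0..})"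
      by (rule DERIV_sum, rule deriv_eqI[OF DERIV_power[OF dD]]) (use t in auto)
    have d3: "((\<lambda>t. \<Sum>i=1..n. Sf t i * Ef t i) has_real_derivative
        (\<Sum>i=1..n. kw * Ef t i * Ef t i + Sf t i * ((Ff t (nx n i) + Ff t (pv n i)) / 2 - Ff t i))) (at t within {t0..})"
      by (rule DERIV_sum, rule deriv_eqI[OF DERIV_mult'[OF dS dE]]) (use t in auto)
    have "(Vf has_real_derivative (\<Sum>i=1..n. 2 * kw * Sf t i * Ef t i)
        + kw / 2 * (\<Sum>i=1..n. 2 * (Df t i * (Ff t (nx n i) - Ff t i)))
        + ep * (\<Sum>i=1..n. kw * Ef t i * Ef t i + Sf t i * ((Ff t (nx n i) + Ff t (pv n i)) / 2 - Ff t i))) (at t within {t0..})"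
      unfolding Vf_def[abs_def] by (intro DERIV_add DERIV_cmult d1 d2 d3)
    then show ?thesis
      by (rule deriv_eqI) (simp add: Vdf_def sum_distrib_left[symmetric])
  qed
  have sS: "(\<Sum>i=1..n. Sf t i) = 0" if t: "t \<ge> t0" for t
  proof -
    have dW: "((\<lambda>t. \<Sum>i=1..n. Sf t i) has_real_derivative 0) (at s within {t0..})" if s: "s \<ge> t0" for s
    proof -
      have "((\<lambda>t. \<Sum>i=1..n. Sf t i) has_real_derivative (\<Sum>i=1..n. kw * Ef s i)) (at s within {t0..})"
        by (rule DERIV_sum, rule dS) (use s in auto)
      then show ?thesis by (rule deriv_eqI) (use sE[of s] in \<open>simp add: sum_distrib_left[symmetric]\<close>)
    qed
    have dW': "((\<lambda>t. - (\<Sum>i=1..n. Sf t i)) has_real_derivative - 0) (at s within {t0..})" if s: "s \<ge> t0" for s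
      by (rule DERIV_minus[OF dW[OF s]])
    have a: "(\<Sum>i=1..n. Sf t i) \<le> (\<Sum>i=1..n. Sf t0 i)"
      by (rule nonincr_within[of t0 _ "\<lambda>_. 0", OF dW]) (use t in auto)
    have b: "- (\<Sum>i=1..n. Sf t i) \<le> - (\<Sum>i=1..n. Sf t0 i)"
      by (rule nonincr_within[of t0 "\<lambda>t. - (\<Sum>i=1..n. Sf t i)" "\<lambda>_. - 0", OF dW']) (use t in auto)
    have c: "(\<Sum>i=1..n. Sf t0 i) = 0"
    proof -
      have "(\<Sum>i=1..n. Sf t0 i) = (\<Sum>i=1..n. omega i t0) + (\<Sum>i=1..n. xi i) - (\<Sum>i=1..n. xb)"
        by (simp add: Sf_def sum.distrib sum_subtractf)
      also have "(\<Sum>i=1..n. omega i t0) = 0" using omega0 by simp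
      also have "(\<Sum>i=1..n. xb) = (\<Sum>i=1..n. xi i)" using n1 by (simp add: xb_def)
      finally show ?thesis by simp
    qed
    show ?thesis using a b c by linarith
  qed
  have Vdle: "Vdf t \<le> - al * Vf t" if t: "t \<ge> t0" for t
    using lyap_core(1)[where E="Ef t" and D="Df t" and S="Sf t" and xb=xb, OF n1 ED sD sS[OF t] kw kp ep]
    by (simp add: Vdf_def Vf_def Ff_def al_def)
  have Vlow: "Vf t \<ge> (1/2) * (\<Sum>i=1..n. (Sf t i)^2) + kw / 4 * (\<Sum>i=1..n. (Ef t i)^2)" if t: "t \<ge> t0" for t
    using lyap_core(2)[where E="Ef t" and D="Df t" and S="Sf t", OF n1 ED sD sS[OF t] kw kp ep]
    by (simp add: Vf_def)
  have Vdec: "Vf t \<le> Vf t0 * exp (- al * (t - t0))" if t: "t \<ge> t0" for t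
    by (rule exp_decay_within[OF dV Vdle t])
  have Vnn: "Vf t \<ge> 0" if t: "t \<ge> t0" for t
  proof -
    have sq0: "(\<Sum>i=1..n. (Sf t i)^2) \<ge> 0" "(\<Sum>i=1..n. (Ef t i)^2) \<ge> 0" by (auto intro: sum_nonneg)
    have kE: "kw / 4 * (\<Sum>i=1..n. (Ef t i)^2) \<ge> 0" using sq0 kw by simp
    show ?thesis using Vlow[OF t] sq0 kE by linarith
  qed
  define M where "M = Vf t0"
  have M0: "M \<ge> 0" unfolding M_def by (rule Vnn) simp
  define R where "R = sqrt ((4 / kw + 2) * M)"
  have SE_bound: "\<bar>Sf t i\<bar> \<le> R * exp (- (al/2) * (t - t0)) \<and> \<bar>Ef t i\<bar> \<le> R * exp (- (al/2) * (t - t0))"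
    if i: "i \<in> {1..n}" and t: "t \<ge> t0" for i t
  proof -
    have sq0: "(\<Sum>i=1..n. (Sf t i)^2) \<ge> 0" "(\<Sum>i=1..n. (Ef t i)^2) \<ge> 0" by (auto intro: sum_nonneg)
    have s1: "(Sf t i)^2 \<le> (\<Sum>i=1..n. (Sf t i)^2)" by (rule member_le_sum) (use i in auto)
    have e1: "(Ef t i)^2 \<le> (\<Sum>i=1..n. (Ef t i)^2)" by (rule member_le_sum) (use i in auto)
    have kE: "kw / 4 * (\<Sum>i=1..n. (Ef t i)^2) \<ge> 0" using sq0 kw by simp
    have V0: "Vf t \<ge> 0" using Vlow[OF t] sq0 kE by linarith
    have "(Sf t i)^2 \<le> 2 * Vf t" using Vlow[OF t] s1 kE by linarith
    also have "\<dots> \<le> (4 / kw + 2) * Vf t" using V0 kw by (intro mult_right_mono) auto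
    finally have s2: "(Sf t i)^2 \<le> (4 / kw + 2) * Vf t" .
    have "kw / 4 * (Ef t i)^2 \<le> kw / 4 * (\<Sum>i=1..n. (Ef t i)^2)" using e1 kw by simp
    then have "kw / 4 * (Ef t i)^2 \<le> Vf t" using Vlow[OF t] sq0 by linarith
    then have "(Ef t i)^2 \<le> 4 / kw * Vf t" using kw by (simp add: field_simps)
    also have "\<dots> \<le> (4 / kw + 2) * Vf t" using V0 kw by (intro mult_right_mono) auto
    finally have e2: "(Ef t i)^2 \<le> (4 / kw + 2) * Vf t" .
    have "(4 / kw + 2) * Vf t \<le> (4 / kw + 2) * (M * exp (- al * (t - t0)))"
      using Vdec[OF t] kw by (intro mult_left_mono) (auto simp: M_def)
    also have "\<dots> = (R * exp (- (al/2) * (t - t0)))^2"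
    proof -
      have "exp (- al * (t - t0)) = exp (- (al/2) * (t - t0)) * exp (- (al/2) * (t - t0))"
        by (subst exp_add[symmetric]) (simp add: algebra_simps)
      moreover have "R^2 = (4 / kw + 2) * M" unfolding R_def using M0 kw by simp
      ultimately have "(4 / kw + 2) * (M * exp (- al * (t - t0))) = (R * R) * (exp (- (al/2) * (t - t0)) * exp (- (al/2) * (t - t0)))"
        by (simp add: power2_eq_square)
      then show ?thesis by (simp add: power2_eq_square mult_ac)
    qed
    finally have bnd: "(4 / kw + 2) * Vf t \<le> (R * exp (- (al/2) * (t - t0)))^2" .
    have R0: "R * exp (- (al/2) * (t - t0)) \<ge> 0"
    proof -
      have "0 \<le> (4 / kw + 2) * M" using M0 kw by simp
      then have "R \<ge> 0" unfolding R_def by simp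
      then show ?thesis by simp
    qed
    show ?thesis
      using abs_le_square_iff[of "Sf t i" "R * exp (- (al/2) * (t - t0))"]
        abs_le_square_iff[of "Ef t i" "R * exp (- (al/2) * (t - t0))"] s2 e2 bnd R0 by auto
  qed
  have R0: "R \<ge> 0"
  proof -
    have "0 \<le> (4 / kw + 2) * M" using M0 kw by simp
    then show "R \<ge> 0" unfolding R_def by simp
  qed
  have rho_b: "\<bar>rho i t - rho_star\<bar> \<le> \<bar>rho i t0 - rho_star\<bar> * exp (- k_rho * (t - t0))"
    if i: "i \<in> {1..n}" and t: "t \<ge> t0" for i t
  proof (rule sq_decay[OF _ t])
    fix s assume s: "s \<ge> t0"
    have "(rho i has_real_derivative k_rho * (rho_star - rho i s)) (at s within {t0..})" using drho i s by blast
    then show "((\<lambda>t. rho i t - rho_star) has_real_derivative - k_rho * (rho i s - rho_star)) (at s within {t0..})"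
      by (rule deriv_eqI[OF DERIV_diff[OF _ DERIV_const]]) (simp add: algebra_simps)
  qed
  have z_b: "\<bar>z i t\<bar> \<le> \<bar>z i t0\<bar> * exp (- k_z * (t - t0))"
    if i: "i \<in> {1..n}" and t: "t \<ge> t0" for i t
  proof (rule sq_decay[OF _ t])
    fix s assume s: "s \<ge> t0"
    show "(z i has_real_derivative - k_z * z i s) (at s within {t0..})" using dz i s by blast
  qed
  define lam where "lam = min (al / 2) (min k_rho k_z)"
  define c where "c = 1 + (1 + kp) * R + (\<Sum>i=1..n. \<bar>rho i t0 - rho_star\<bar>) + (\<Sum>i=1..n. \<bar>z i t0\<bar>)"
  have lam: "lam > 0" using al gains by (simp add: lam_def)
  have sums0: "(\<Sum>i=1..n. \<bar>rho i t0 - rho_star\<bar>) \<ge> 0" "(\<Sum>i=1..n. \<bar>z i t0\<bar>) \<ge> 0"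
    by (auto intro: sum_nonneg)
  have kpR: "(1 + kp) * R \<ge> 0" using kp R0 by simp
  have c: "c > 0" unfolding c_def using sums0 kpR by linarith
  have mono: "a * exp (- k * (t - t0)) \<le> c * exp (- lam * (t - t0))"
    if "0 \<le> a" "a \<le> c" "lam \<le> k" "t0 \<le> t" for a k t
  proof -
    have "exp (- k * (t - t0)) \<le> exp (- lam * (t - t0))"
      using that by (simp add: mult_right_mono)
    then have "a * exp (- k * (t - t0)) \<le> a * exp (- lam * (t - t0))"
      using that by (simp add: mult_left_mono)
    also have "\<dots> \<le> c * exp (- lam * (t - t0))" using that by (simp add: mult_right_mono)
    finally show ?thesis .
  qed
  have main: "\<bar>rho i t - rho_star\<bar> \<le> c * exp (- lam * (t - t0)) \<and>
        \<bar>phi i t - phibar n (\<lambda>j. phi j t) i\<bar> \<le> c * exp (- lam * (t - t0)) \<and>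
        (\<forall>d. (phi i has_real_derivative d) (at t within {t0..}) \<longrightarrow>
             \<bar>d - (\<Sum>j=1..n. xi j) / real n\<bar> \<le> c * exp (- lam * (t - t0))) \<and>
        \<bar>z i t\<bar> \<le> c * exp (- lam * (t - t0))"
    if i: "i \<in> {1..n}" and t: "t \<ge> t0" for i t
  proof (intro conjI allI impI)
    have SEb: "\<bar>Sf t i\<bar> \<le> R * exp (- (al/2) * (t - t0))" "\<bar>Ef t i\<bar> \<le> R * exp (- (al/2) * (t - t0))"
      using SE_bound[OF i t] by auto
    have lam1: "lam \<le> al / 2" "lam \<le> k_rho" "lam \<le> k_z" by (auto simp: lam_def)
    have r1: "\<bar>rho i t0 - rho_star\<bar> \<le> c"
    proof -
      have "\<bar>rho i t0 - rho_star\<bar> \<le> (\<Sum>i=1..n. \<bar>rho i t0 - rho_star\<bar>)"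
        by (rule member_le_sum) (use i in auto)
      then show ?thesis unfolding c_def using sums0 kpR by linarith
    qed
    have z1: "\<bar>z i t0\<bar> \<le> c"
    proof -
      have "\<bar>z i t0\<bar> \<le> (\<Sum>i=1..n. \<bar>z i t0\<bar>)"
        by (rule member_le_sum) (use i in auto)
      then show ?thesis unfolding c_def using sums0 kpR by linarith
    qed
    have R1: "(1 + kp) * R \<le> c" unfolding c_def using sums0 by linarith
    have R2: "R \<le> c"
    proof -
      have "kp * R \<ge> 0" using kp R0 by simp
      moreover have "(1 + kp) * R = R + kp * R" by (simp add: algebra_simps)
      ultimately show ?thesis using R1 by linarith
    qed
    show "\<bar>rho i t - rho_star\<bar> \<le> c * exp (- lam * (t - t0))"
      using rho_b[OF i t] mono[of "\<bar>rho i t0 - rho_star\<bar>" k_rho t] r1 lam1 t by simp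
    show "\<bar>z i t\<bar> \<le> c * exp (- lam * (t - t0))"
      using z_b[OF i t] mono[of "\<bar>z i t0\<bar>" k_z t] z1 lam1 t by simp
    have "\<bar>phi i t - phibar n (\<lambda>j. phi j t) i\<bar> = \<bar>Ef t i\<bar>" by (simp add: Ef_def abs_minus_commute)
    also have "\<dots> \<le> R * exp (- (al/2) * (t - t0))" by (rule SEb(2))
    also have "\<dots> \<le> c * exp (- lam * (t - t0))" using mono[of R "al/2" t] R0 R2 lam1 t by simp
    finally show "\<bar>phi i t - phibar n (\<lambda>j. phi j t) i\<bar> \<le> c * exp (- lam * (t - t0))" .
    fix d assume dd: "(phi i has_real_derivative d) (at t within {t0..})"
    have "d = Ff t i" by (rule has_field_derivative_unique[OF dd dphi'[OF i t] not_bot_within[OF t]])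
    then have "d - (\<Sum>j=1..n. xi j) / real n = Sf t i + kp * Ef t i" by (simp add: Ff_def xb_def)
    then have "\<bar>d - (\<Sum>j=1..n. xi j) / real n\<bar> \<le> \<bar>Sf t i\<bar> + kp * \<bar>Ef t i\<bar>"
      using kp by (simp add: abs_triangle_ineq[THEN order_trans] abs_mult)
    also have "\<dots> \<le> R * exp (- (al/2) * (t - t0)) + kp * (R * exp (- (al/2) * (t - t0)))"
      using SEb kp by (intro add_mono mult_left_mono) auto
    also have "\<dots> = ((1 + kp) * R) * exp (- (al/2) * (t - t0))" by (simp add: algebra_simps)
    also have "\<dots> \<le> c * exp (- lam * (t - t0))" using mono[of "(1 + kp) * R" "al/2" t] kpR R1 lam1 t by simp
    finally show "\<bar>d - (\<Sum>j=1..n. xi j) / real n\<bar> \<le> c * exp (- lam * (t - t0))" .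
  qed
  show ?thesis using c lam main by blast
qed

end
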